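(* Let $(X,d^\star)$ be a $\star$-metric space and $M\subseteq X$ a nonempty subset. Then $(M,d^\star|_{M\times M})$ is totally bounded if and only if $(\overline{M},d^\star|_{\overline{M}\times\overline{M}})$ is totally bounded, where $\overline{M}$ is the closure of $M$ in $(X,\mathscr{T}_{d^\star})$.
   Context: A $t$-definer is a function $\star:[0,\infty)\times[0,\infty)\to[0,\infty)$ such that for all $a,b,c\ge 0$: $a\star b=b\star a$; $a\star(b\star c)=(a\star b)\star c$; if $a\le b$ then $a\star c\le b\star c$; $a\star 0=a$; and $\star$ is continuous in its first variable with respect to the Euclidean topology. Given a nonempty set $X$ and a $t$-definer $\star$, a $\star$-metric on $X$ is a function $d^\star:X\times X\to[0,\infty)$ such that for all $x,y,z\in X$: $d^\star(x,y)=0$ iff $x=y$; $d^\star(x,y)=d^\star(y,x)$; and $d^\star(x,y)\le d^\star(x,z)\star d^\star(z,y)$; $(X,d^\star)$ is a $\star$-metric space. Put $B_{d^\star}(a,r)=\{x\in X: d^\star(a,x)<r\}$ and let $\mathscr{T}_{d^\star}$ be the topology consisting of all $U\subseteq X$ such that for each $a\in U$ some $B_{d^\star}(a,r)$, $r>0$, is contained in $U$. A $\star$-metric space $(Y,\rho)$ is totally bounded if for every $\epsilon>0$ there is a finite set $F\subseteq Y$ with $Y=\bigcup_{x\in F}\{y\in Y:\rho(x,y)<\epsilon\}$. *)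

theory Defs
  imports "HOL-Analysis.Analysis"
begin

text \<open>A t-definer: a binary operation on [0,\<infinity>), represented as a real function
  whose relevant behaviour is on nonnegative arguments.\<close>
definition t_definer :: "(real \<Rightarrow> real \<Rightarrow> real) \<Rightarrow> bool" where
  "t_definer st \<longleftrightarrow>
     (\<forall>a\<ge>0. \<forall>b\<ge>0. st a b \<ge> 0) \<and>
     (\<forall>a\<ge>0. \<forall>b\<ge>0. st a b = st b a) \<and>
     (\<forall>a\<ge>0. \<forall>b\<ge>0. \<forall>c\<ge>0. st a (st b c) = st (st a b) c) \<and>
     (\<forall>a\<ge>0. \<forall>b\<ge>0. \<forall>c\<ge>0. a \<le> b \<longrightarrow> st a c \<le> st b c) \<and>
     (\<forall>a\<ge>0. st a 0 = a) \<and>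
     (\<forall>c\<ge>0. continuous_on {0..} (\<lambda>a. st a c))"

definition star_metric :: "(real \<Rightarrow> real \<Rightarrow> real) \<Rightarrow> 'a set \<Rightarrow> ('a \<Rightarrow> 'a \<Rightarrow> real) \<Rightarrow> bool" where
  "star_metric st X d \<longleftrightarrow>
     (\<forall>x\<in>X. \<forall>y\<in>X. d x y \<ge> 0) \<and>
     (\<forall>x\<in>X. \<forall>y\<in>X. d x y = 0 \<longleftrightarrow> x = y) \<and>
     (\<forall>x\<in>X. \<forall>y\<in>X. d x y = d y x) \<and>
     (\<forall>x\<in>X. \<forall>y\<in>X. \<forall>z\<in>X. d x y \<le> st (d x z) (d z y))"

definition star_ball :: "'a set \<Rightarrow> ('a \<Rightarrow> 'a \<Rightarrow> real) \<Rightarrow> 'a \<Rightarrow> real \<Rightarrow> 'a set" where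
  "star_ball X d a r = {x \<in> X. d a x < r}"

definition star_topology :: "'a set \<Rightarrow> ('a \<Rightarrow> 'a \<Rightarrow> real) \<Rightarrow> 'a topology" where
  "star_topology X d = topology (\<lambda>U. U \<subseteq> X \<and> (\<forall>a\<in>U. \<exists>r>0. star_ball X d a r \<subseteq> U))"

definition star_totally_bounded :: "'a set \<Rightarrow> ('a \<Rightarrow> 'a \<Rightarrow> real) \<Rightarrow> bool" where
  "star_totally_bounded Y d \<longleftrightarrow>
     (\<forall>\<epsilon>>0. \<exists>F. finite F \<and> F \<subseteq> Y \<and> Y = (\<Union>x\<in>F. {y \<in> Y. d x y < \<epsilon>}))"

end

theory Submission
  imports Defs
begin

lemma td_parts:
  assumes "t_definer st"
  shows td_nn: "\<And>a b. 0 \<le> a \<Longrightarrow> 0 \<le> b \<Longrightarrow> st a b \<ge> 0"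
    and td_comm: "\<And>a b. 0 \<le> a \<Longrightarrow> 0 \<le> b \<Longrightarrow> st a b = st b a"
    and td_mono: "\<And>a b c. 0 \<le> a \<Longrightarrow> 0 \<le> b \<Longrightarrow> 0 \<le> c \<Longrightarrow> a \<le> b \<Longrightarrow> st a c \<le> st b c"
    and td_zero: "\<And>a. 0 \<le> a \<Longrightarrow> st a 0 = a"
    and td_cont: "\<And>c. 0 \<le> c \<Longrightarrow> continuous_on {0..} (\<lambda>a. st a c)"
proof -
  note A = assms[unfolded t_definer_def]
  note A1 = conjunct1[OF A] and A2 = conjunct1[OF conjunct2[OF A]]
    and A4 = conjunct1[OF conjunct2[OF conjunct2[OF conjunct2[OF A]]]]
    and A5 = conjunct1[OF conjunct2[OF conjunct2[OF conjunct2[OF conjunct2[OF A]]]]]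
    and A6 = conjunct2[OF conjunct2[OF conjunct2[OF conjunct2[OF conjunct2[OF A]]]]]
  show "\<And>a b. 0 \<le> a \<Longrightarrow> 0 \<le> b \<Longrightarrow> st a b \<ge> 0" using A1 by blast
  show "\<And>a b. 0 \<le> a \<Longrightarrow> 0 \<le> b \<Longrightarrow> st a b = st b a" using A2 by blast
  show "\<And>a b c. 0 \<le> a \<Longrightarrow> 0 \<le> b \<Longrightarrow> 0 \<le> c \<Longrightarrow> a \<le> b \<Longrightarrow> st a c \<le> st b c" using A4 by blast
  show "\<And>a. 0 \<le> a \<Longrightarrow> st a 0 = a" using A5 by blast
  show "\<And>c. 0 \<le> c \<Longrightarrow> continuous_on {0..} (\<lambda>a. st a c)" using A6 by blast
qed

lemma sm_parts:
  assumes "star_metric st X d"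
  shows sm_nn: "\<And>x y. x \<in> X \<Longrightarrow> y \<in> X \<Longrightarrow> d x y \<ge> 0"
    and sm_zero: "\<And>x y. x \<in> X \<Longrightarrow> y \<in> X \<Longrightarrow> d x y = 0 \<longleftrightarrow> x = y"
    and sm_sym: "\<And>x y. x \<in> X \<Longrightarrow> y \<in> X \<Longrightarrow> d x y = d y x"
    and sm_tri: "\<And>x y z. x \<in> X \<Longrightarrow> y \<in> X \<Longrightarrow> z \<in> X \<Longrightarrow> d x y \<le> st (d x z) (d z y)"
proof -
  note A = assms[unfolded star_metric_def]
  note A1 = conjunct1[OF A] and A2 = conjunct1[OF conjunct2[OF A]]
    and A3 = conjunct1[OF conjunct2[OF conjunct2[OF A]]]
    and A4 = conjunct2[OF conjunct2[OF conjunct2[OF A]]]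
  show "\<And>x y. x \<in> X \<Longrightarrow> y \<in> X \<Longrightarrow> d x y \<ge> 0" using A1 by blast
  show "\<And>x y. x \<in> X \<Longrightarrow> y \<in> X \<Longrightarrow> d x y = 0 \<longleftrightarrow> x = y" using A2 by blast
  show "\<And>x y. x \<in> X \<Longrightarrow> y \<in> X \<Longrightarrow> d x y = d y x" using A3 by blast
  show "\<And>x y z. x \<in> X \<Longrightarrow> y \<in> X \<Longrightarrow> z \<in> X \<Longrightarrow> d x y \<le> st (d x z) (d z y)" using A4 by blast
qed

lemma absless: "\<bar>(x::real) - c\<bar> < (e - c)/2 \<Longrightarrow> c < e \<Longrightarrow> x < e"
  by (auto simp: abs_if split: if_splits)

lemma td_small:
  assumes T: "t_definer st" and c: "0 \<le> c" "c < e"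
  shows "\<exists>r>0. st r c < e"
proof -
  have H: "\<forall>x\<in>{0..}. \<forall>e>0. \<exists>d>0. \<forall>x'\<in>{0..}. dist x' x < d \<longrightarrow> dist (st x' c) (st x c) < e"
    using td_cont[OF T c(1)] unfolding continuous_on_iff .
  have ep: "(e - c)/2 > 0" using c by simp
  have "\<exists>d>0. \<forall>x'\<in>{0..}. dist x' 0 < d \<longrightarrow> dist (st x' c) (st 0 c) < (e - c)/2"
    using H ep atLeast_iff[of "0::real" 0] by blast
  then obtain r where r: "r > 0" and h: "\<forall>x'\<in>{0..}. dist x' 0 < r \<longrightarrow> dist (st x' c) (st 0 c) < (e - c)/2"
    by blast
  have "st 0 c = c" using td_comm[OF T, of 0 c] td_zero[OF T c(1)] c by simp
  moreover have "dist (st (r/2) c) (st 0 c) < (e - c)/2" using h r by auto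
  ultimately have "\<bar>st (r/2) c - c\<bar> < (e - c)/2" by (simp add: dist_real_def)
  then have "st (r/2) c < e" using c absless by blast
  thus ?thesis using r by (intro exI[of _ "r/2"]) auto
qed

lemma td_mono2:
  assumes T: "t_definer st" and "0 \<le> a" "0 \<le> b" "0 \<le> c" "0 \<le> e" "a \<le> b" "c \<le> e"
  shows "st a c \<le> st b e"
proof -
  have "st a c \<le> st b c" using td_mono[OF T] assms by blast
  also have "st b c = st c b" using td_comm[OF T] assms by blast
  also have "\<dots> \<le> st e b" using td_mono[OF T] assms by blast
  also have "st e b = st b e" using td_comm[OF T] assms by blast
  finally show ?thesis .
qed

lemma td_delta:
  assumes T: "t_definer st" and e: "e > 0"
  shows "\<exists>\<delta>>0. \<forall>a b. 0 \<le> a \<longrightarrow> 0 \<le> b \<longrightarrow> a < \<delta> \<longrightarrow> b < \<delta> \<longrightarrow> st a b < e"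
proof -
  obtain r where r: "r > 0" "st r (e/2) < e" using td_small[OF T, of "e/2" e] e by auto
  show ?thesis
  proof (intro exI[of _ "min r (e/2)"] conjI allI impI)
    show "min r (e/2) > 0" using r e by auto
    fix a b :: real assume "0 \<le> a" "0 \<le> b" "a < min r (e/2)" "b < min r (e/2)"
    then have "st a b \<le> st r (e/2)" using td_mono2[OF T, of a r b "e/2"] e by auto
    then show "st a b < e" using r by auto
  qed
qed

lemma istop:
  "istopology (\<lambda>U. U \<subseteq> X \<and> (\<forall>a\<in>U. \<exists>r>0. star_ball X d a r \<subseteq> U))"
proof -
  have A: "S \<inter> T \<subseteq> X \<and> (\<forall>a\<in>S \<inter> T. \<exists>r>0. star_ball X d a r \<subseteq> S \<inter> T)"
    if S: "S \<subseteq> X \<and> (\<forall>a\<in>S. \<exists>r>0. star_ball X d a r \<subseteq> S)"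
    and T: "T \<subseteq> X \<and> (\<forall>a\<in>T. \<exists>r>0. star_ball X d a r \<subseteq> T)" for S T
  proof (intro conjI ballI)
    show "S \<inter> T \<subseteq> X" using S by auto
    fix a assume "a \<in> S \<inter> T"
    then obtain r1 r2 where "r1 > 0" "star_ball X d a r1 \<subseteq> S" "r2 > 0" "star_ball X d a r2 \<subseteq> T"
      using S T by blast
    then show "\<exists>r>0. star_ball X d a r \<subseteq> S \<inter> T"
      by (intro exI[of _ "min r1 r2"]) (auto simp: star_ball_def)
  qed
  have B: "\<Union>K \<subseteq> X \<and> (\<forall>a\<in>\<Union>K. \<exists>r>0. star_ball X d a r \<subseteq> \<Union>K)"
    if H: "\<forall>S\<in>K. S \<subseteq> X \<and> (\<forall>a\<in>S. \<exists>r>0. star_ball X d a r \<subseteq> S)" for K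
  proof (intro conjI ballI)
    show "\<Union>K \<subseteq> X" using H by auto
    fix a assume "a \<in> \<Union>K"
    then obtain S where S: "S \<in> K" "a \<in> S" by auto
    have "\<forall>a\<in>S. \<exists>r>0. star_ball X d a r \<subseteq> S" using H S(1) by blast
    then obtain r where "r > 0" "star_ball X d a r \<subseteq> S" using S(2) by blast
    then show "\<exists>r>0. star_ball X d a r \<subseteq> \<Union>K" using S by auto
  qed
  show ?thesis unfolding istopology_def
    apply (rule conjI)
     apply (intro allI impI)
     apply (rule A; assumption)
    apply (intro allI impI)
    apply (rule B; assumption)
    done
qed

lemma openin_st:
  "openin (star_topology X d) U \<longleftrightarrow> U \<subseteq> X \<and> (\<forall>a\<in>U. \<exists>r>0. star_ball X d a r \<subseteq> U)"
  unfolding star_topology_def topology_inverse'[OF istop] by (rule refl)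

lemma topspace_st: "topspace (star_topology X d) = X"
proof -
  have "openin (star_topology X d) X" unfolding openin_st by (auto simp: star_ball_def intro: exI[of _ 1])
  then have "X \<subseteq> topspace (star_topology X d)" by (simp add: openin_subset)
  moreover have "topspace (star_topology X d) \<subseteq> X" unfolding topspace_def openin_st by auto
  ultimately show ?thesis by auto
qed

lemma ball_open:
  assumes T: "t_definer st" and D: "star_metric st X d" and y: "y \<in> X"
  shows "openin (star_topology X d) (star_ball X d y \<delta>)"
  unfolding openin_st
proof (intro conjI ballI)
  show "star_ball X d y \<delta> \<subseteq> X" by (auto simp: star_ball_def)
  fix a assume a: "a \<in> star_ball X d y \<delta>"
  then have aX: "a \<in> X" and lt: "d y a < \<delta>" by (auto simp: star_ball_def)
  have nn: "d y a \<ge> 0" using sm_nn[OF D y aX] .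
  obtain r where r: "r > 0" "st r (d y a) < \<delta>" using td_small[OF T nn lt] by auto
  show "\<exists>r>0. star_ball X d a r \<subseteq> star_ball X d y \<delta>"
  proof (intro exI[of _ r] conjI subsetI)
    show "r > 0" by fact
    fix z assume "z \<in> star_ball X d a r"
    then have zX: "z \<in> X" and dz: "d a z < r" by (auto simp: star_ball_def)
    have nz: "d a z \<ge> 0" using sm_nn[OF D aX zX] .
    have "d y z \<le> st (d y a) (d a z)" using sm_tri[OF D y zX aX] .
    also have "\<dots> = st (d a z) (d y a)" using td_comm[OF T nn nz] .
    also have "\<dots> \<le> st r (d y a)" using td_mono[OF T nz _ nn, of r] dz nz by simp
    finally show "z \<in> star_ball X d y \<delta>" using r zX by (auto simp: star_ball_def)
  qed
qed

lemma closure_near: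
  assumes T: "t_definer st" and D: "star_metric st X d"
    and y: "y \<in> (star_topology X d) closure_of M" and dl: "\<delta> > 0"
  shows "y \<in> X \<and> (\<exists>m\<in>M. d y m < \<delta>)"
proof -
  have yX: "y \<in> X" using y closure_of_subset_topspace topspace_st by fastforce
  have "y \<in> star_ball X d y \<delta>" using yX dl sm_zero[OF D yX yX] unfolding star_ball_def by auto
  then obtain m where "m \<in> M" "m \<in> star_ball X d y \<delta>"
    using y ball_open[OF T D yX, of \<delta>] unfolding closure_of_def by blast
  then show ?thesis using yX by (auto simp: star_ball_def)
qed

theorem theorem3p5:
  fixes st :: "real \<Rightarrow> real \<Rightarrow> real" and X M :: "'a set" and d :: "'a \<Rightarrow> 'a \<Rightarrow> real"
  assumes "t_definer st"
    and "star_metric st X d"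
    and "M \<subseteq> X" and "M \<noteq> {}"
  shows "star_totally_bounded M d \<longleftrightarrow>
         star_totally_bounded ((star_topology X d) closure_of M) d"
proof -
  note T = assms(1) and D = assms(2)
  define C where "C = (star_topology X d) closure_of M"
  have MC: "M \<subseteq> C" unfolding C_def using assms(3) by (simp add: closure_of_subset topspace_st)
  have CX: "C \<subseteq> X" unfolding C_def using closure_of_subset_topspace topspace_st by fastforce
  have tri: "d x y < e" if "x \<in> X" "y \<in> X" "z \<in> X" "d x z < \<delta>" "d z y < \<delta>"
    "\<forall>a b. 0 \<le> a \<longrightarrow> 0 \<le> b \<longrightarrow> a < \<delta> \<longrightarrow> b < \<delta> \<longrightarrow> st a b < e" for x y z \<delta> e
  proof -
    have "d x z \<ge> 0" "d z y \<ge> 0" using sm_nn[OF D] that by blast+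
    moreover have "d x y \<le> st (d x z) (d z y)" using sm_tri[OF D] that by blast
    moreover have "st (d x z) (d z y) < e" using that(6) calculation(1,2) that(4,5) by blast
    ultimately show ?thesis by linarith
  qed
  have sym: "d x y = d y x" if "x \<in> X" "y \<in> X" for x y using sm_sym[OF D that] .
  show ?thesis
    unfolding C_def[symmetric]
  proof
    assume H: "star_totally_bounded M d"
    show "star_totally_bounded C d" unfolding star_totally_bounded_def
    proof (intro allI impI)
      fix e :: real assume e: "e > 0"
      obtain \<delta> where dl: "\<delta> > 0" "\<forall>a b. 0 \<le> a \<longrightarrow> 0 \<le> b \<longrightarrow> a < \<delta> \<longrightarrow> b < \<delta> \<longrightarrow> st a b < e"
        using td_delta[OF T e] by blast
      have "\<exists>F. finite F \<and> F \<subseteq> M \<and> M = (\<Union>x\<in>F. {y \<in> M. d x y < \<delta>})"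
        using H[unfolded star_totally_bounded_def, rule_format, OF dl(1)] .
      then obtain F where F0: "finite F \<and> F \<subseteq> M \<and> M = (\<Union>x\<in>F. {y \<in> M. d x y < \<delta>})" ..
      have F1: "finite F" using F0[THEN conjunct1] .
      have F2: "F \<subseteq> M" using F0[THEN conjunct2, THEN conjunct1] .
      have F3: "M \<subseteq> (\<Union>x\<in>F. {y \<in> M. d x y < \<delta>})" using conjunct2[OF conjunct2[OF F0]] by (rule equalityD1)
      have cov: "C \<subseteq> (\<Union>x\<in>F. {y \<in> C. d x y < e})"
      proof
        fix y assume y: "y \<in> C"
        have "y \<in> (star_topology X d) closure_of M" using y unfolding C_def .
        then obtain m where m: "m \<in> M" "d y m < \<delta>" using closure_near[OF T D _ dl(1)] by blast
        have "m \<in> (\<Union>x\<in>F. {y \<in> M. d x y < \<delta>})" using F3 m(1) by (rule subsetD)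
        then obtain x where x: "x \<in> F" "d x m < \<delta>" by blast
        have xX: "x \<in> X" using x(1) F2 assms(3) by blast
        have mX: "m \<in> X" using m(1) assms(3) by blast
        have yX: "y \<in> X" using y CX by blast
        have "d m y < \<delta>" using m(2) sym[OF yX mX] by simp
        then have "d x y < e" using tri[OF xX yX mX x(2) _ dl(2)] by blast
        then show "y \<in> (\<Union>x\<in>F. {y \<in> C. d x y < e})" using x(1) y by blast
      qed
      have E: "C = (\<Union>x\<in>F. {y \<in> C. d x y < e})"
        by (rule equalityI[OF cov]) (rule UN_least, rule Collect_restrict)
      have F2': "F \<subseteq> C" using F2 MC by (rule subset_trans)
      show "\<exists>F. finite F \<and> F \<subseteq> C \<and> C = (\<Union>x\<in>F. {y \<in> C. d x y < e})"
        by (intro exI[of _ F] conjI F1 F2' E)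
    qed
  next
    assume H: "star_totally_bounded C d"
    show "star_totally_bounded M d" unfolding star_totally_bounded_def
    proof (intro allI impI)
      fix e :: real assume e: "e > 0"
      obtain \<delta> where dl: "\<delta> > 0" "\<forall>a b. 0 \<le> a \<longrightarrow> 0 \<le> b \<longrightarrow> a < \<delta> \<longrightarrow> b < \<delta> \<longrightarrow> st a b < e"
        using td_delta[OF T e] by blast
      have "\<exists>F. finite F \<and> F \<subseteq> C \<and> C = (\<Union>x\<in>F. {y \<in> C. d x y < \<delta>})"
        using H[unfolded star_totally_bounded_def, rule_format, OF dl(1)] .
      then obtain F where F0: "finite F \<and> F \<subseteq> C \<and> C = (\<Union>x\<in>F. {y \<in> C. d x y < \<delta>})" ..
      have F1: "finite F" using F0[THEN conjunct1] .
      have F2: "F \<subseteq> C" using F0[THEN conjunct2, THEN conjunct1] .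
      have F3: "C \<subseteq> (\<Union>x\<in>F. {y \<in> C. d x y < \<delta>})" using conjunct2[OF conjunct2[OF F0]] by (rule equalityD1)
      define F' where "F' = {x \<in> F. \<exists>m\<in>M. d x m < \<delta>}"
      define g where "g x = (SOME m. m \<in> M \<and> d x m < \<delta>)" for x
      have g: "g x \<in> M \<and> d x (g x) < \<delta>" if "x \<in> F'" for x
      proof -
        have "\<exists>m. m \<in> M \<and> d x m < \<delta>" using that unfolding F'_def by blast
        then show ?thesis unfolding g_def by (rule someI_ex)
      qed
      have cov: "M \<subseteq> (\<Union>x\<in>g ` F'. {y \<in> M. d x y < e})"
      proof
        fix y assume y: "y \<in> M"
        have "y \<in> C" using y MC by blast
        then have "y \<in> (\<Union>x\<in>F. {y \<in> C. d x y < \<delta>})" using F3 by (rule subsetD[rotated])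
        then obtain x where x: "x \<in> F" "d x y < \<delta>" by blast
        then have xF: "x \<in> F'" using y unfolding F'_def by blast
        have gx: "g x \<in> M" "d x (g x) < \<delta>" using g[OF xF] by auto
        have xX: "x \<in> X" using x(1) F2 CX by blast
        have gX: "g x \<in> X" using gx(1) assms(3) by blast
        have yX: "y \<in> X" using y assms(3) by blast
        have "d (g x) x < \<delta>" using gx(2) sym[OF xX gX] by simp
        then have "d (g x) y < e" using tri[OF gX yX xX _ x(2) dl(2)] by blast
        then show "y \<in> (\<Union>x\<in>g ` F'. {y \<in> M. d x y < e})" using xF y by blast
      qed
      have E: "M = (\<Union>x\<in>g ` F'. {y \<in> M. d x y < e})"
        by (rule equalityI[OF cov]) (rule UN_least, rule Collect_restrict)
      have G: "g ` F' \<subseteq> M" using g by blast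
      have "finite F'" using F1 unfolding F'_def by simp
      then have G2: "finite (g ` F')" by (rule finite_imageI)
      show "\<exists>F. finite F \<and> F \<subseteq> M \<and> M = (\<Union>x\<in>F. {y \<in> M. d x y < e})"
        by (intro exI[of _ "g ` F'"] conjI G G2 E)
    qed
  qed
qed

end
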